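(* Let $L$ be a frame. For a class $\mathcal X$ of sublocales write $\mathrm{int}_{\mathcal X}(S)=\bigvee\{T\in\mathcal X\mid T\subseteq S\}$ (join in $\mathsf{Sl}(L)$). Then fit and $\mathrm{int}_{\mathcal X}$ restrict to mutually inverse order isomorphisms in each of the following cases: (1) $\{\mathrm{fit}(S)\mid S\in\mathcal S_b(L)\}\cong\{\mathrm{int}_{\mathcal S_{lc}(L)}(S)\mid S\in\mathcal S_o(L)\}$; (2) $\{\mathrm{fit}(S)\mid S\in\mathcal S_c(L)\}\cong\{\mathrm{int}_{\mathfrak c[L]}(S)\mid S\in\mathcal S_o(L)\}$; (3) $\{\mathrm{fit}(S)\mid S\in\mathcal S_k(L)\}\cong\{\mathrm{int}_{\mathcal S_{co}(L)}(S)\mid S\in\mathcal S_o(L)\}$; (4) $\{\mathrm{fit}(S)\mid S\in\mathcal S_{sp}(L)\}\cong\{\mathrm{int}_{\mathcal S_{op}(L)}(S)\mid S\in\mathcal S_o(L)\}=\{\mathsf{sp}(S)\mid S\in\mathcal S_o(L)\}$. In each case the isomorphism from right to left is $\mathrm{fit}$ and from left to right is the corresponding $\mathrm{int}_{\mathcal X}$; all posets are ordered by inclusion.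
   Context: A frame is a complete lattice $L$ with $(\bigvee A)\wedge b=\bigvee_{a\in A}(a\wedge b)$, Heyting implication $\to$. A sublocale is a subset closed under all meets with $a\to s\in S$ for $a\in L,s\in S$; sublocales form a coframe $\mathsf{Sl}(L)$ under inclusion with joins $\bigvee_i S_i=\{\bigwedge A\mid A\subseteq\bigcup_iS_i\}$. $\mathfrak o(a)=\{a\to b\mid b\in L\}$, $\mathfrak c(a)={\uparrow}a$, $\mathfrak c[L]=\{\mathfrak c(a)\mid a\in L\}$. $\mathrm{fit}(S)=\bigcap\{\mathfrak o(a)\mid S\subseteq\mathfrak o(a)\}$; $\mathcal S_o(L)$ is the set of fitted sublocales (intersections of open sublocales). $\mathcal S_{lc}(L)=\{\mathfrak c(x)\cap\mathfrak o(y)\mid x,y\in L\}$ (locally closed); $\mathcal S_b(L)$ is the set of joins of locally closed sublocales; $\mathcal S_c(L)$ the set of joins of closed sublocales. A sublocale $S$ is compact if $S\subseteq\bigvee_{a\in A}\mathfrak o(a)$ implies $S\subseteq\mathfrak o(a_1)\vee\dots\vee\mathfrak o(a_n)$ for finitely many $a_i\in A$; $\mathcal S_{co}(L)$ is the set of compact sublocales and $\mathcal S_k(L)$ the set of joins of them. For a prime $p$ ($p\ne1$, $x\wedge y\le p\Rightarrow x\le p$ or $y\le p$), $\mathfrak b(p)=\{p,1\}$; $\mathcal S_{op}(L)$ is the set of such one-point sublocales, $\mathcal S_{sp}(L)$ the set of their joins, and $\mathsf{sp}(S)=\bigvee\{\mathfrak b(p)\mid p\text{ prime},\ \mathfrak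 b(p)\subseteq S\}$. *)

theory Defs
  imports Main
begin

definition frame_law :: "'a::complete_lattice itself \<Rightarrow> bool" where
  "frame_law _ \<longleftrightarrow> (\<forall>(A::'a set) b. inf (Sup A) b = (SUP a\<in>A. inf a b))"

definition himp :: "'a::complete_lattice \<Rightarrow> 'a \<Rightarrow> 'a" where
  "himp a b = Sup {x. inf x a \<le> b}"

definition is_sublocale :: "'a::complete_lattice set \<Rightarrow> bool" where
  "is_sublocale S \<longleftrightarrow> (\<forall>A. A \<subseteq> S \<longrightarrow> Inf A \<in> S) \<and> (\<forall>a s. s \<in> S \<longrightarrow> himp a s \<in> S)"

text \<open>Join in the coframe Sl(L).\<close>
definition sl_join :: "'a::complete_lattice set set \<Rightarrow> 'a set" where
  "sl_join F = {Inf A | A. A \<subseteq> \<Union>F}"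

definition opn :: "'a::complete_lattice \<Rightarrow> 'a set" where
  "opn a = {himp a b | b. True}"

definition cls :: "'a::complete_lattice \<Rightarrow> 'a set" where
  "cls a = {x. a \<le> x}"

definition fit :: "'a::complete_lattice set \<Rightarrow> 'a set" where
  "fit S = \<Inter> {opn a | a. S \<subseteq> opn a}"

definition S_o :: "'a::complete_lattice set set" where
  "S_o = {\<Inter> F | F. F \<subseteq> range opn}"

definition S_lc :: "'a::complete_lattice set set" where
  "S_lc = {cls x \<inter> opn y | x y. True}"

definition S_b :: "'a::complete_lattice set set" where
  "S_b = {sl_join F | F. F \<subseteq> S_lc}"

definition closed_sublocales :: "'a::complete_lattice set set" where
  "closed_sublocales = range cls"

definition S_c :: "'a::complete_lattice set set" where
  "S_c = {sl_join F | F. F \<subseteq> closed_sublocales}"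

definition compact_sl :: "'a::complete_lattice set \<Rightarrow> bool" where
  "compact_sl S \<longleftrightarrow> (\<forall>A. S \<subseteq> sl_join (opn ` A) \<longrightarrow>
      (\<exists>B. B \<subseteq> A \<and> finite B \<and> S \<subseteq> sl_join (opn ` B)))"

definition S_co :: "'a::complete_lattice set set" where
  "S_co = {S. is_sublocale S \<and> compact_sl S}"

definition S_k :: "'a::complete_lattice set set" where
  "S_k = {sl_join F | F. F \<subseteq> S_co}"

definition prime_el :: "'a::complete_lattice \<Rightarrow> bool" where
  "prime_el p \<longleftrightarrow> p \<noteq> top \<and> (\<forall>x y. inf x y \<le> p \<longrightarrow> x \<le> p \<or> y \<le> p)"

definition bpt :: "'a::complete_lattice \<Rightarrow> 'a set" where
  "bpt p = {p, top}"

definition S_op :: "'a::complete_lattice set set" where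
  "S_op = {bpt p | p. prime_el p}"

definition S_sp :: "'a::complete_lattice set set" where
  "S_sp = {sl_join F | F. F \<subseteq> S_op}"

definition sp :: "'a::complete_lattice set \<Rightarrow> 'a set" where
  "sp S = sl_join {bpt p | p. prime_el p \<and> bpt p \<subseteq> S}"

definition intX :: "'a::complete_lattice set set \<Rightarrow> 'a set \<Rightarrow> 'a set" where
  "intX X S = sl_join {T \<in> X. T \<subseteq> S}"

definition mutual_order_iso :: "'b set set \<Rightarrow> 'c set set \<Rightarrow> ('b set \<Rightarrow> 'c set) \<Rightarrow> ('c set \<Rightarrow> 'b set) \<Rightarrow> bool" where
  "mutual_order_iso A B f g \<longleftrightarrow>
     (\<forall>x\<in>A. f x \<in> B) \<and> (\<forall>y\<in>B. g y \<in> A) \<and>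
     (\<forall>x\<in>A. g (f x) = x) \<and> (\<forall>y\<in>B. f (g y) = y) \<and>
     (\<forall>x\<in>A. \<forall>x'\<in>A. x \<subseteq> x' \<longleftrightarrow> f x \<subseteq> f x') \<and>
     (\<forall>y\<in>B. \<forall>y'\<in>B. y \<subseteq> y' \<longleftrightarrow> g y \<subseteq> g y')"

end

theory Submission
  imports Defs
begin

lemma himp_mp:
  assumes "frame_law TYPE('a::complete_lattice)"
  shows "inf (himp a b) a \<le> (b::'a)"
proof -
  have "inf (Sup {x. inf x a \<le> b}) a = (SUP x\<in>{x. inf x a \<le> b}. inf x a)"
    using assms unfolding frame_law_def by blast
  also have "\<dots> \<le> b" by (rule SUP_least) auto
  finally show ?thesis unfolding himp_def .
qed

lemma himp_I: "inf y a \<le> b \<Longrightarrow> y \<le> himp a b"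
  unfolding himp_def by (rule Sup_upper) simp

lemma opn_Inf:
  assumes fr: "frame_law TYPE('a::complete_lattice)" and B: "B \<subseteq> opn (a::'a)"
  shows "Inf B \<in> opn a"
proof -
  let ?c = "Inf B"
  have "himp a ?c \<le> ?c"
  proof (rule Inf_greatest)
    fix s assume "s \<in> B"
    then obtain b where sb: "s = himp a b" using B unfolding opn_def by blast
    have "?c \<le> s" using \<open>s \<in> B\<close> by (rule Inf_lower)
    have "inf (himp a ?c) a \<le> inf ?c a"
      using himp_mp[OF fr, of a ?c] by (simp add: le_inf_iff)
    also have "\<dots> \<le> inf s a" using \<open>?c \<le> s\<close> by (rule inf_mono) simp
    also have "\<dots> \<le> b" using himp_mp[OF fr, of a b] sb by simp
    finally show "himp a ?c \<le> s" unfolding sb by (rule himp_I)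
  qed
  moreover have "?c \<le> himp a ?c" by (rule himp_I) simp
  ultimately have "?c = himp a ?c" by (simp add: antisym)
  then show ?thesis unfolding opn_def by blast
qed

lemma So_Inf:
  assumes fr: "frame_law TYPE('a::complete_lattice)" and S: "S \<in> (S_o :: 'a set set)"
    and A: "A \<subseteq> S"
  shows "Inf A \<in> S"
proof -
  obtain F where F: "F \<subseteq> range opn" "S = \<Inter>F" using S unfolding S_o_def by blast
  show ?thesis unfolding F(2)
  proof
    fix U assume "U \<in> F"
    then obtain a where "U = opn a" using F by blast
    moreover have "A \<subseteq> U" using A F(2) \<open>U \<in> F\<close> by blast
    ultimately show "Inf A \<in> U" using opn_Inf[OF fr] by blast
  qed
qed

lemma fit_mono: "S \<subseteq> S' \<Longrightarrow> fit S \<subseteq> fit S'"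
  unfolding fit_def by blast

lemma fit_in_So: "fit S \<in> S_o"
proof -
  have "{opn a | a. S \<subseteq> opn a} \<subseteq> range opn" by blast
  then show ?thesis unfolding fit_def S_o_def by blast
qed

lemma fit_le_iff: "S \<in> S_o \<Longrightarrow> fit T \<subseteq> S \<longleftrightarrow> T \<subseteq> S"
proof -
  assume "S \<in> S_o"
  then obtain F where F: "F \<subseteq> range opn" "S = \<Inter>F" unfolding S_o_def by blast
  have "T \<subseteq> fit T" unfolding fit_def by blast
  moreover have "fit T \<subseteq> S" if TS: "T \<subseteq> S"
  proof -
    have "fit T \<subseteq> U" if "U \<in> F" for U
    proof -
      obtain a where Ua: "U = opn a" using F(1) \<open>U \<in> F\<close> by blast
      have "T \<subseteq> opn a" using TS F(2) \<open>U \<in> F\<close> Ua by blast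
      then show ?thesis unfolding Ua fit_def by blast
    qed
    then show ?thesis unfolding F(2) by blast
  qed
  ultimately show ?thesis by blast
qed

lemma sl_join_mono: "F \<subseteq> G \<Longrightarrow> sl_join F \<subseteq> sl_join G"
  unfolding sl_join_def by blast

lemma sl_join_upper: "U \<in> F \<Longrightarrow> U \<subseteq> sl_join F"
proof
  fix u assume "U \<in> F" "u \<in> U"
  then have "{u} \<subseteq> \<Union>F" by blast
  moreover have "u = Inf {u}" by simp
  ultimately show "u \<in> sl_join F" unfolding sl_join_def by blast
qed

lemma intX_mono: "S \<subseteq> S' \<Longrightarrow> intX X S \<subseteq> intX X S'"
  unfolding intX_def by (rule sl_join_mono) blast

lemma intX_in: "intX X S \<in> {sl_join F | F. F \<subseteq> X}"
  unfolding intX_def by blast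

lemma le_intX: "T \<in> {sl_join F | F. F \<subseteq> X} \<Longrightarrow> T \<subseteq> S \<Longrightarrow> T \<subseteq> intX X S"
proof -
  assume "T \<in> {sl_join F | F. F \<subseteq> X}" "T \<subseteq> S"
  then obtain F where F: "F \<subseteq> X" "T = sl_join F" by blast
  have "F \<subseteq> {U \<in> X. U \<subseteq> S}" using F sl_join_upper \<open>T \<subseteq> S\<close> by blast
  then show ?thesis unfolding F(2) intX_def by (rule sl_join_mono)
qed

lemma intX_le:
  assumes fr: "frame_law TYPE('a::complete_lattice)" and S: "S \<in> (S_o :: 'a set set)"
  shows "intX X S \<subseteq> S"
  unfolding intX_def sl_join_def using So_Inf[OF fr S] by blast

lemma gen:
  assumes fr: "frame_law TYPE('a::complete_lattice)"
  shows "mutual_order_iso (fit ` {sl_join F | F. F \<subseteq> (X::'a set set)}) (intX X ` S_o) (intX X) fit"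
proof -
  let ?P = "{sl_join F | F. F \<subseteq> X}"
  have unit: "T \<subseteq> intX X (fit T)" if "T \<in> ?P" for T
    using le_intX[OF that] fit_le_iff[OF fit_in_So] by blast
  have counit: "fit (intX X S) \<subseteq> S" if "S \<in> S_o" for S
    using fit_le_iff[OF that] intX_le[OF fr that] by blast
  have A: "fit (intX X (fit T)) = fit T" if "T \<in> ?P" for T
    using fit_mono[OF unit[OF that]] counit[OF fit_in_So] by blast
  have B: "intX X (fit (intX X S)) = intX X S" if "S \<in> S_o" for S
    using unit[OF intX_in] intX_mono[OF counit[OF that]] by blast
  show ?thesis unfolding mutual_order_iso_def
  proof (intro conjI ballI)
    fix x assume "x \<in> fit ` ?P" then show "intX X x \<in> intX X ` S_o" using fit_in_So by blast
  next
    fix y assume "y \<in> intX X ` S_o" then show "fit y \<in> fit ` ?P" using intX_in by blast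
  next
    fix x assume "x \<in> fit ` ?P" then show "fit (intX X x) = x" using A by blast
  next
    fix y assume "y \<in> intX X ` S_o" then show "intX X (fit y) = y" using B by blast
  next
    fix x x' assume "x \<in> fit ` ?P" "x' \<in> fit ` ?P"
    then obtain T T' where "T \<in> ?P" "T' \<in> ?P" "x = fit T" "x' = fit T'" by blast
    then show "x \<subseteq> x' \<longleftrightarrow> intX X x \<subseteq> intX X x'"
      using A[of T] A[of T'] intX_mono[of x x' X] fit_mono[of "intX X x" "intX X x'"] by auto
  next
    fix y y' assume "y \<in> intX X ` S_o" "y' \<in> intX X ` S_o"
    then obtain S S' where "S \<in> S_o" "S' \<in> S_o" "y = intX X S" "y' = intX X S'" by blast
    then show "y \<subseteq> y' \<longleftrightarrow> fit y \<subseteq> fit y'"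
      using B[of S] B[of S'] fit_mono[of y y'] intX_mono[of "fit y" "fit y'" X] by auto
  qed
qed

lemma intX_Sop: "intX S_op S = sp S"
  unfolding intX_def sp_def S_op_def
  by (rule arg_cong[where f=sl_join]) blast

theorem mainTheorem16:
  assumes "frame_law TYPE('a::complete_lattice)"
  shows "mutual_order_iso (fit ` (S_b :: 'a set set)) (intX S_lc ` S_o) (intX S_lc) fit
       \<and> mutual_order_iso (fit ` (S_c :: 'a set set)) (intX closed_sublocales ` S_o) (intX closed_sublocales) fit
       \<and> mutual_order_iso (fit ` (S_k :: 'a set set)) (intX S_co ` S_o) (intX S_co) fit
       \<and> mutual_order_iso (fit ` (S_sp :: 'a set set)) (intX S_op ` S_o) (intX S_op) fit
       \<and> intX S_op ` (S_o :: 'a set set) = sp ` S_o"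
  unfolding S_b_def S_c_def S_k_def S_sp_def
  by (intro conjI gen[OF assms] image_cong refl intX_Sop)

end
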